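(* In dimension $d=1$, every Poisson hard sphere process almost surely does not percolate.
   Context: A sphere process is a simple point process $\Lambda$ on $\mathbb{R}^d\times[0,\infty)$; its support is $[\Lambda]=\{(x,r):\Lambda(\{(x,r)\})=1\}$, and $(x,r)\in[\Lambda]$ means there is a sphere (closed ball) of radius $r\ge0$ centred at $x$. The centre process is $\widetilde\Lambda(\cdot)=\Lambda(\cdot\times[0,\infty))$; $\Lambda$ is a Poisson sphere process if $\widetilde\Lambda$ is a homogeneous Poisson process. $\Lambda$ is a hard sphere process if almost surely $|x-y|\ge r+s$ for all distinct $(x,r),(y,s)\in[\Lambda]$. Let $G(\Lambda)=\{y:|y-x|\le r\text{ for some }(x,r)\in[\Lambda]\}$; its connected components are clusters, and $\Lambda$ percolates if some cluster is unbounded. *)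

theory Defs
  imports "HOL-Probability.Probability"
begin

text \<open>Dimension d = 1. A realisation of a simple sphere process is represented by its
support, a set of pairs (x, r) with centre x and radius r \<ge> 0. The number of points
in a set A is counted in the extended nonnegative reals (infinite sets count as \<infinity>).\<close>

definition pcount :: "('b set) \<Rightarrow> 'b set \<Rightarrow> ennreal" where
  "pcount S A = emeasure (count_space UNIV) (S \<inter> A)"

definition sphere_process :: "'w measure \<Rightarrow> ('w \<Rightarrow> (real \<times> real) set) \<Rightarrow> bool" where
  "sphere_process M \<Lambda> \<longleftrightarrow>
     prob_space M \<and>
     (\<forall>\<omega>\<in>space M. \<Lambda> \<omega> \<subseteq> UNIV \<times> {0..}) \<and>
     (\<forall>\<omega>\<in>space M. \<forall>A. bounded A \<longrightarrow> finite (\<Lambda> \<omega> \<inter> A)) \<and>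
     (\<forall>A \<in> sets borel. (\<lambda>\<omega>. pcount (\<Lambda> \<omega>) A) \<in> borel_measurable M)"

definition centre_count :: "(real \<times> real) set \<Rightarrow> real set \<Rightarrow> ennreal" where
  "centre_count S B = pcount S (B \<times> {0..})"

definition homogeneous_poisson :: "'w measure \<Rightarrow> real \<Rightarrow> (real set \<Rightarrow> 'w \<Rightarrow> ennreal) \<Rightarrow> bool" where
  "homogeneous_poisson M lam N \<longleftrightarrow>
     prob_space M \<and> lam > 0 \<and>
     (\<forall>B \<in> sets borel. bounded B \<longrightarrow>
        N B \<in> borel_measurable M \<and>
        (\<forall>k::nat. measure M {\<omega> \<in> space M. N B \<omega> = of_nat k} =
            (lam * measure lborel B) ^ k / fact k * exp (- (lam * measure lborel B)))) \<and>
     (\<forall>(I::nat set) Bs. finite I \<longrightarrow> (\<forall>i\<in>I. Bs i \<in> sets borel \<and> bounded (Bs i)) \<longrightarrow>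
        disjoint_family_on Bs I \<longrightarrow>
        prob_space.indep_vars M (\<lambda>_. borel) (\<lambda>i. N (Bs i)) I)"

definition poisson_sphere_process :: "'w measure \<Rightarrow> ('w \<Rightarrow> (real \<times> real) set) \<Rightarrow> bool" where
  "poisson_sphere_process M \<Lambda> \<longleftrightarrow> sphere_process M \<Lambda> \<and>
     (\<exists>lam. homogeneous_poisson M lam (\<lambda>B \<omega>. centre_count (\<Lambda> \<omega>) B))"

definition hard_sphere_process :: "'w measure \<Rightarrow> ('w \<Rightarrow> (real \<times> real) set) \<Rightarrow> bool" where
  "hard_sphere_process M \<Lambda> \<longleftrightarrow> sphere_process M \<Lambda> \<and>
     (AE \<omega> in M. \<forall>x r y s. (x, r) \<in> \<Lambda> \<omega> \<longrightarrow> (y, s) \<in> \<Lambda> \<omega> \<longrightarrow> (x, r) \<noteq> (y, s) \<longrightarrow>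
        r + s \<le> \<bar>x - y\<bar>)"

definition occupied :: "(real \<times> real) set \<Rightarrow> real set" where
  "occupied S = {y. \<exists>(x, r) \<in> S. \<bar>y - x\<bar> \<le> r}"

definition percolates :: "(real \<times> real) set \<Rightarrow> bool" where
  "percolates S \<longleftrightarrow> (\<exists>y \<in> occupied S. \<not> bounded (connected_component_set (occupied S) y))"

end

theory Submission
  imports Defs
begin


lemma (in prob_space) blocks_io:
  fixes X :: "nat \<Rightarrow> 'a \<Rightarrow> ennreal" and a b :: real
  assumes ind: "\<And>I. finite I \<Longrightarrow> indep_vars (\<lambda>_. borel) X I"
    and pa0: "\<And>j. prob {\<omega>\<in>space M. X (3*j) \<omega> = 2} = a"
    and pb: "\<And>j. prob {\<omega>\<in>space M. X (3*j+1) \<omega> = 0} = b"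
    and pa2: "\<And>j. prob {\<omega>\<in>space M. X (3*j+2) \<omega> = 2} = a"
    and apos: "a > 0" and bpos: "b > 0"
  shows "AE \<omega> in M. \<forall>m. \<exists>k\<ge>m. X (3*k) \<omega> = 2 \<and> X (3*k+1) \<omega> = 0 \<and> X (3*k+2) \<omega> = 2"
proof -
  have Xm: "X i \<in> borel_measurable M" for i
    using ind[of "{i}"] unfolding indep_vars_def2 by auto
  define v where "v i = (if i mod 3 = 1 then (0::ennreal) else 2)" for i :: nat
  define E where "E i = {X i -` A \<inter> space M | A. A \<in> sets (borel :: ennreal measure)}" for i
  define G where "G j = {\<omega>\<in>space M. X (3*j) \<omega> = 2 \<and> X (3*j+1) \<omega> = 0 \<and> X (3*j+2) \<omega> = 2}" for j
  define I3 where "I3 j = {3*j, 3*j+1, 3*j+2}" for j :: nat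
  have indE: "indep_sets E I" if "finite I" for I
    using ind[OF that] unfolding indep_vars_def2 E_def by auto
  have AinE: "X i -` {v} \<inter> space M \<in> E i" for i v
    unfolding E_def by (intro CollectI exI[of _ "{v}"]) auto
  have Gev: "G j \<in> events" for j
    unfolding G_def using Xm by measurable
  have m3: "Suc (Suc (3*j)) mod 3 = 2" "Suc (3*j) mod 3 = 1" "(3*j) mod 3 = 0" for j :: nat
    by presburger+
  have G_eq: "G j = (\<Inter>i\<in>I3 j. X i -` {v i} \<inter> space M)" for j
    unfolding G_def I3_def v_def by (auto simp: m3)
  have pG: "prob (G j) = a * b * a" for j
  proof -
    have "prob (G j) = (\<Prod>i\<in>I3 j. prob (X i -` {v i} \<inter> space M))"
      unfolding G_eq by (rule indep_setsD[OF indE[of "I3 j"]]) (auto simp: I3_def AinE)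
    also have "\<dots> = a * b * a"
      unfolding I3_def using pa0[of j] pb[of j] pa2[of j]
      by (simp add: v_def vimage_def Int_def conj_commute m3)
    finally show ?thesis .
  qed
  define c where "c = a * b * a"
  have cpos: "c > 0" using apos bpos by (simp add: c_def)
  have c1: "c \<le> 1" using pG[of 0] c_def by (metis prob_le_1)
  have pK: "prob (\<Inter>j\<in>{m..m+K}. space M - G j) = (1 - c) ^ Suc K" for m K
  proof -
    have disj: "disjoint_family_on I3 {m..m+K}"
      unfolding disjoint_family_on_def I3_def by auto
    have ind2: "indep_sets (\<lambda>j. sigma_sets (space M) (\<Union>i\<in>I3 j. E i)) {m..m+K}"
    proof (rule indep_sets_collect_sigma[OF indE _ disj])
      show "finite (\<Union>j\<in>{m..m+K}. I3 j)" by (auto simp: I3_def)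
      fix i j show "Int_stable (E i)"
        unfolding E_def Int_stable_def
        apply auto
        apply (rule_tac x="A \<inter> Aa" in exI)
        apply auto
        done
    qed
    have mem: "space M - G j \<in> sigma_sets (space M) (\<Union>i\<in>I3 j. E i)" for j
    proof -
      have XX: "X i -` {v i} \<inter> space M \<in> sigma_sets (space M) (\<Union>i\<in>I3 j. E i)" if "i \<in> I3 j" for i
        using AinE that by blast
      interpret S: sigma_algebra "space M" "sigma_sets (space M) (\<Union>i\<in>I3 j. E i)"
        by (rule sigma_algebra_sigma_sets) (auto simp: E_def)
      have "G j \<in> sigma_sets (space M) (\<Union>i\<in>I3 j. E i)"
        unfolding G_eq
        by (intro S.finite_INT XX) (auto simp: I3_def)
      then show ?thesis by (rule sigma_sets.Compl)
    qed
    have "prob (\<Inter>j\<in>{m..m+K}. space M - G j) = (\<Prod>j\<in>{m..m+K}. prob (space M - G j))"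
      by (rule indep_setsD[OF ind2]) (auto simp: mem)
    also have "\<dots> = (\<Prod>j\<in>{m..m+K}. 1 - c)"
      using prob_compl[OF Gev] pG c_def by simp
    also have "\<dots> = (1 - c) ^ Suc K" by simp
    finally show ?thesis .
  qed
  define B where "B m = {\<omega>\<in>space M. \<forall>k\<ge>m. \<omega> \<notin> G k}" for m
  have Bev: "B m \<in> events" for m
  proof -
    have "B m = space M \<inter> (\<Inter>k\<in>{m..}. space M - G k)" unfolding B_def by auto
    then show ?thesis using Gev by auto
  qed
  have B0: "prob (B m) = 0" for m
  proof (rule ccontr)
    assume "prob (B m) \<noteq> 0"
    then have pos: "prob (B m) > 0" using measure_nonneg[of M "B m"] by linarith
    obtain K where K: "(1 - c) ^ K < prob (B m)"
      using real_arch_pow_inv[OF pos, of "1 - c"] cpos by auto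
    have "prob (B m) \<le> prob (\<Inter>j\<in>{m..m+K}. space M - G j)"
      by (rule finite_measure_mono) (auto simp: B_def intro!: sets.Diff sets.finite_UN Gev)
    also have "\<dots> = (1 - c) ^ Suc K" by (rule pK)
    also have "\<dots> \<le> (1 - c) ^ K" using cpos c1 by (intro power_decreasing) auto
    finally show False using K by simp
  qed
  have null: "(\<Union>m. B m) \<in> null_sets M"
  proof -
    have "B m \<in> null_sets M" for m
      using B0[of m] Bev[of m] by (intro null_setsI) (simp_all add: emeasure_eq_measure)
    then show ?thesis by (intro null_sets_UN) auto
  qed
  show ?thesis
  proof (rule AE_I'[OF null])
    show "{\<omega> \<in> space M. \<not> (\<forall>m. \<exists>k\<ge>m. X (3*k) \<omega> = 2 \<and> X (3*k+1) \<omega> = 0 \<and> X (3*k+2) \<omega> = 2)} \<subseteq> (\<Union>m. B m)"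
      unfolding B_def G_def by auto
  qed
qed



definition blk :: "real \<Rightarrow> nat \<Rightarrow> real set" where
  "blk a t = (if t = 0 then {a..<a+1} else if t = 1 then {a+1..<a+5} else {a+5..<a+6})"

lemma pcount_two:
  assumes "pcount S A = 2"
  obtains p q where "S \<inter> A = {p, q}" "p \<noteq> q"
proof -
  have fin: "finite (S \<inter> A)"
    using assms unfolding pcount_def by (cases "finite (S \<inter> A)") auto
  then have "card (S \<inter> A) = 2"
    using assms unfolding pcount_def by simp
  then show ?thesis using that by (auto simp: card_2_iff)
qed

lemma pcount_zero:
  assumes "pcount S A = 0"
  shows "S \<inter> A = {}"
  using assms unfolding pcount_def by (simp add: emeasure_count_space_eq_0)

lemma uncovered:
  assumes hard: "\<forall>x r y s. (x, r) \<in> S \<longrightarrow> (y, s) \<in> S \<longrightarrow> (x, r) \<noteq> (y, s) \<longrightarrow> r + s \<le> \<bar>x - y\<bar>"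
    and nonneg: "S \<subseteq> UNIV \<times> {0..}"
    and c0: "pcount S (blk a 0 \<times> {0..}) = 2"
    and c1: "pcount S (blk a 1 \<times> {0..}) = 0"
    and c2: "pcount S (blk a 2 \<times> {0..}) = 2"
  shows "a + 3 \<notin> occupied S"
proof
  assume "a + 3 \<in> occupied S"
  then obtain x r where xr: "(x, r) \<in> S" "\<bar>a + 3 - x\<bar> \<le> r"
    unfolding occupied_def by auto
  have r0: "r \<ge> 0" using xr nonneg by auto
  have notmid: "\<not> (a + 1 \<le> x \<and> x < a + 5)"
    using pcount_zero[OF c1] xr r0 by (auto simp: blk_def)
  show False
  proof (cases "x < a + 3")
    case True
    then have xl: "x < a + 1" using notmid by auto
    obtain p q where pq: "S \<inter> (blk a 0 \<times> {0..}) = {p, q}" "p \<noteq> q"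
      using pcount_two[OF c0] by blast
    obtain e where e: "e \<in> {p, q}" "e \<noteq> (x, r)"
    proof (cases "p = (x, r)")
      case True then show ?thesis using that[of q] pq(2) by simp
    next
      case False then show ?thesis using that[of p] by simp
    qed
    obtain y s where yse: "e = (y, s)" by (cases e)
    have ys: "(y, s) \<in> S \<inter> (blk a 0 \<times> {0..})" "(y, s) \<noteq> (x, r)"
      using e yse pq(1) by auto
    then have "a \<le> y" "y < a + 1" "s \<ge> 0" by (auto simp: blk_def)
    moreover have "r + s \<le> \<bar>x - y\<bar>" using hard xr(1) ys(1) ys(2) by blast
    ultimately have "r + s \<le> \<bar>x - y\<bar>" "\<bar>x - y\<bar> < a + 3 - x" "s \<ge> 0"
      using xl True by (auto simp: abs_le_iff abs_less_iff)
    moreover have "a + 3 - x \<le> r" using xr(2) True by (simp add: abs_le_iff)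
    ultimately show False by linarith
  next
    case False
    then have xl: "x \<ge> a + 5" using notmid by auto
    obtain p q where pq: "S \<inter> (blk a 2 \<times> {0..}) = {p, q}" "p \<noteq> q"
      using pcount_two[OF c2] by blast
    obtain e where e: "e \<in> {p, q}" "e \<noteq> (x, r)"
    proof (cases "p = (x, r)")
      case True then show ?thesis using that[of q] pq(2) by simp
    next
      case False then show ?thesis using that[of p] by simp
    qed
    obtain y s where yse: "e = (y, s)" by (cases e)
    have ys: "(y, s) \<in> S \<inter> (blk a 2 \<times> {0..})" "(y, s) \<noteq> (x, r)"
      using e yse pq(1) by auto
    then have "a + 5 \<le> y" "y < a + 6" "s \<ge> 0" by (auto simp: blk_def)
    moreover have "r + s \<le> \<bar>x - y\<bar>" using hard xr(1) ys(1) ys(2) by blast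
    ultimately have "r + s \<le> \<bar>x - y\<bar>" "\<bar>x - y\<bar> < x - (a + 3)" "s \<ge> 0"
      using xl False by (auto simp: abs_le_iff abs_less_iff)
    moreover have "x - (a + 3) \<le> r" using xr(2) False by (simp add: abs_le_iff)
    ultimately show False by linarith
  qed
qed

lemma no_perc:
  assumes up: "\<And>y. \<exists>z\<ge>y. z \<notin> occupied S"
    and down: "\<And>y. \<exists>z\<le>y. z \<notin> occupied S"
  shows "\<not> percolates S"
proof
  assume "percolates S"
  then obtain y where y: "y \<in> occupied S" "\<not> bounded (connected_component_set (occupied S) y)"
    unfolding percolates_def by auto
  let ?C = "connected_component_set (occupied S) y"
  obtain z1 where z1: "z1 \<ge> y" "z1 \<notin> occupied S" using up by blast
  obtain z0 where z0: "z0 \<le> y" "z0 \<notin> occupied S" using down by blast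
  have int: "is_interval ?C"
    by (simp add: is_interval_connected_1)
  have sub: "?C \<subseteq> occupied S" by (rule connected_component_subset)
  have ivl: "\<And>u v w. u \<in> ?C \<Longrightarrow> v \<in> ?C \<Longrightarrow> u \<le> w \<Longrightarrow> w \<le> v \<Longrightarrow> w \<in> ?C"
    using int unfolding is_interval_1 by blast
  have yC: "y \<in> ?C" using y(1) by (simp add: connected_component_refl_eq)
  have "?C \<subseteq> {z0..z1}"
  proof
    fix c assume c: "c \<in> ?C"
    have "c \<le> z1"
    proof (rule ccontr)
      assume "\<not> c \<le> z1"
      then have "z1 \<in> ?C" using ivl[OF yC c] z1(1) by simp
      then show False using sub z1(2) by auto
    qed
    moreover have "z0 \<le> c"
    proof (rule ccontr)
      assume "\<not> z0 \<le> c"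
      then have "z0 \<in> ?C" using ivl[OF c yC] z0(1) by simp
      then show False using sub z0(2) by auto
    qed
    ultimately show "c \<in> {z0..z1}" by auto
  qed
  then have "bounded ?C" using bounded_subset bounded_closed_interval by blast
  then show False using y(2) by simp
qed



lemma blk_sub: "blk a t \<subseteq> {a..<a+6}"
  by (auto simp: blk_def)

lemma blk_disj: "t < 3 \<Longrightarrow> t' < 3 \<Longrightarrow> t \<noteq> t' \<Longrightarrow> blk a t \<inter> blk a t' = {}"
  by (auto simp: blk_def)

lemma blk_borel: "blk a t \<in> sets borel"
  by (auto simp: blk_def)

lemma blk_bounded: "bounded (blk a t)"
  by (auto simp: blk_def)

lemma blk_measure: "measure lborel (blk a 0) = 1" "measure lborel (blk a 1) = 4" "measure lborel (blk a 2) = 1"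
  by (auto simp: blk_def)

lemma int_blocks_disj:
  fixes p q :: int
  assumes "p \<noteq> q"
  shows "{6 * real_of_int p..<6 * real_of_int p + 6} \<inter> {6 * real_of_int q..<6 * real_of_int q + 6} = {}"
proof -
  have "p + 1 \<le> q \<or> q + 1 \<le> p" using assms by linarith
  then have "real_of_int p + 1 \<le> real_of_int q \<or> real_of_int q + 1 \<le> real_of_int p"
    by (metis of_int_add of_int_le_iff of_int_1)
  then show ?thesis by auto
qed

lemma dir:
  fixes N :: "real set \<Rightarrow> 'w \<Rightarrow> ennreal" and f :: "nat \<Rightarrow> int"
  assumes hp: "homogeneous_poisson M lam N" and inj: "inj f"
  shows "AE \<omega> in M. \<forall>m. \<exists>k\<ge>m. N (blk (6 * real_of_int (f k)) 0) \<omega> = 2 \<and>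
            N (blk (6 * real_of_int (f k)) 1) \<omega> = 0 \<and> N (blk (6 * real_of_int (f k)) 2) \<omega> = 2"
proof -
  interpret prob_space M using hp unfolding homogeneous_poisson_def by auto
  have lam: "lam > 0" using hp unfolding homogeneous_poisson_def by auto
  have hpD: "\<And>B k. B \<in> sets borel \<Longrightarrow> bounded B \<Longrightarrow>
      prob {\<omega> \<in> space M. N B \<omega> = of_nat k} =
            (lam * measure lborel B) ^ k / fact k * exp (- (lam * measure lborel B))"
    using hp unfolding homogeneous_poisson_def by blast
  have hpI: "\<And>(I::nat set) Bs. finite I \<Longrightarrow> (\<forall>i\<in>I. Bs i \<in> sets borel \<and> bounded (Bs i)) \<Longrightarrow>
        disjoint_family_on Bs I \<Longrightarrow> indep_vars (\<lambda>_. borel) (\<lambda>i. N (Bs i)) I"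
    using hp unfolding homogeneous_poisson_def by blast
  define Bs where "Bs i = blk (6 * real_of_int (f (i div 3))) (i mod 3)" for i
  have m3: "Suc (Suc (3*j)) mod 3 = 2" "Suc (3*j) mod 3 = 1" "(3*j) mod 3 = 0"
     "Suc (Suc (3*j)) div 3 = j" "Suc (3*j) div 3 = j" "(3*j) div 3 = j" for j :: nat
    by presburger+
  have disj: "disjoint_family_on Bs I" for I
    unfolding disjoint_family_on_def
  proof (intro ballI impI)
    fix i j :: nat assume "i \<noteq> j"
    show "Bs i \<inter> Bs j = {}"
    proof (cases "i div 3 = j div 3")
      case True
      then have "i mod 3 \<noteq> j mod 3" using \<open>i \<noteq> j\<close> by (metis div_mod_decomp)
      then show ?thesis unfolding Bs_def True by (intro blk_disj) auto
    next
      case False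
      then have "f (i div 3) \<noteq> f (j div 3)" using inj by (auto dest: injD)
      from int_blocks_disj[OF this] show ?thesis
        unfolding Bs_def using blk_sub by blast
    qed
  qed
  have "AE \<omega> in M. \<forall>m. \<exists>k\<ge>m. N (Bs (3*k)) \<omega> = 2 \<and> N (Bs (3*k+1)) \<omega> = 0 \<and> N (Bs (3*k+2)) \<omega> = 2"
  proof (rule blocks_io[where a = "lam^2 / 2 * exp (- lam)" and b = "exp (- (lam * 4))"])
    show "indep_vars (\<lambda>_. borel) (\<lambda>i. N (Bs i)) I" if "finite I" for I
      using that by (intro hpI disj) (auto simp: Bs_def blk_borel blk_bounded)
    show "prob {\<omega> \<in> space M. N (Bs (3 * j)) \<omega> = 2} = lam\<^sup>2 / 2 * exp (- lam)" for j
      using hpD[of "Bs (3*j)" 2] by (simp add: Bs_def m3 blk_borel blk_bounded blk_measure)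
    show "prob {\<omega> \<in> space M. N (Bs (3 * j + 2)) \<omega> = 2} = lam\<^sup>2 / 2 * exp (- lam)" for j
      using hpD[of "Bs (3*j+2)" 2] by (simp add: Bs_def m3 blk_borel blk_bounded blk_measure)
    show "prob {\<omega> \<in> space M. N (Bs (3 * j + 1)) \<omega> = 0} = exp (- (lam * 4))" for j
      using hpD[of "Bs (3*j+1)" 0] by (simp add: Bs_def m3 blk_borel blk_bounded blk_def)
    show "lam\<^sup>2 / 2 * exp (- lam) > 0" using lam by simp
    show "exp (- (lam * 4)) > 0" by simp
  qed
  then show ?thesis by (simp add: Bs_def m3)
qed



theorem mainTheorem4:
  fixes M :: "'w measure" and \<Lambda> :: "'w \<Rightarrow> (real \<times> real) set"
  assumes "poisson_sphere_process M \<Lambda>"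
    and "hard_sphere_process M \<Lambda>"
  shows "AE \<omega> in M. \<not> percolates (\<Lambda> \<omega>)"
proof -
  obtain lam where sp: "sphere_process M \<Lambda>"
    and hp: "homogeneous_poisson M lam (\<lambda>B \<omega>. centre_count (\<Lambda> \<omega>) B)"
    using assms(1) unfolding poisson_sphere_process_def by blast
  let ?N = "\<lambda>B \<omega>. centre_count (\<Lambda> \<omega>) B"
  have nonneg: "\<forall>\<omega>\<in>space M. \<Lambda> \<omega> \<subseteq> UNIV \<times> {0..}"
    using sp unfolding sphere_process_def by blast
  have hard: "AE \<omega> in M. \<forall>x r y s. (x, r) \<in> \<Lambda> \<omega> \<longrightarrow> (y, s) \<in> \<Lambda> \<omega> \<longrightarrow> (x, r) \<noteq> (y, s) \<longrightarrow>
        r + s \<le> \<bar>x - y\<bar>"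
    using assms(2) unfolding hard_sphere_process_def by blast
  have up: "AE \<omega> in M. \<forall>m. \<exists>k\<ge>m. ?N (blk (6 * real_of_int (int k)) 0) \<omega> = 2 \<and>
            ?N (blk (6 * real_of_int (int k)) 1) \<omega> = 0 \<and> ?N (blk (6 * real_of_int (int k)) 2) \<omega> = 2"
    by (rule dir[OF hp]) (auto intro: injI)
  have down: "AE \<omega> in M. \<forall>m. \<exists>k\<ge>m. ?N (blk (6 * real_of_int (- int k)) 0) \<omega> = 2 \<and>
            ?N (blk (6 * real_of_int (- int k)) 1) \<omega> = 0 \<and> ?N (blk (6 * real_of_int (- int k)) 2) \<omega> = 2"
    by (rule dir[OF hp]) (auto intro: injI)
  show ?thesis
    using AE_space up down hard
  proof eventually_elim
    case (elim \<omega>)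
    let ?S = "\<Lambda> \<omega>"
    have nn: "?S \<subseteq> UNIV \<times> {0..}" using nonneg elim(1) by blast
    have unc: "a + 3 \<notin> occupied ?S" if "?N (blk a 0) \<omega> = 2" "?N (blk a 1) \<omega> = 0" "?N (blk a 2) \<omega> = 2" for a
      using uncovered[OF elim(4) nn] that unfolding centre_count_def by blast
    show ?case
    proof (rule no_perc)
      fix y :: real
      obtain k where k: "k \<ge> nat \<lceil>\<bar>y\<bar>\<rceil>" and
        kk: "?N (blk (6 * real_of_int (int k)) 0) \<omega> = 2" "?N (blk (6 * real_of_int (int k)) 1) \<omega> = 0"
            "?N (blk (6 * real_of_int (int k)) 2) \<omega> = 2"
        using elim(2) by blast
      have "real k \<ge> \<bar>y\<bar>" using k by linarith
      then have "6 * real_of_int (int k) + 3 \<ge> y" by simp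
      then show "\<exists>z\<ge>y. z \<notin> occupied ?S" using unc[OF kk] by blast
    next
      fix y :: real
      obtain k where k: "k \<ge> nat \<lceil>\<bar>y\<bar>\<rceil> + 1" and
        kk: "?N (blk (6 * real_of_int (- int k)) 0) \<omega> = 2" "?N (blk (6 * real_of_int (- int k)) 1) \<omega> = 0"
            "?N (blk (6 * real_of_int (- int k)) 2) \<omega> = 2"
        using elim(3) by blast
      have "real k \<ge> \<bar>y\<bar> + 1" using k by linarith
      then have "6 * real_of_int (- int k) + 3 \<le> y" by simp
      then show "\<exists>z\<le>y. z \<notin> occupied ?S" using unc[OF kk] by blast
    qed
  qed
qed

end
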